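(* The following problem is undecidable: given a finite signature $\Sigma$ and a finite set $E$ of equations between $\Sigma$-terms, decide whether the monad $T$ on $\mathbf{Set}$ presented by $(\Sigma,E)$ is affine, i.e. whether $T1$ is a one-element set.
   Context: The monad presented by $(\Sigma,E)$ is the free-algebra monad: $TX$ is the carrier of the free $\Sigma$-algebra satisfying $E$ generated by $X$ (terms over $X$ modulo the congruence generated by substitution instances of $E$), $Tf$ substitutes $f(x)$ for $x$, $\eta$ sends a variable to itself, and $\mu$ flattens terms of terms. A monad is affine if $T1$ is terminal, i.e. a one-element set. *)

theory Defs
  imports Main "HOL-Library.Nat_Bijection"
begin

datatype recf = Zero | Succ | Proj nat | Comp recf "recf list"
  | PrimRec recf recf | Mu recf

inductive ev :: "recf \<Rightarrow> nat list \<Rightarrow> nat \<Rightarrow> bool" where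
  ev_zero: "ev Zero xs 0"
| ev_succ: "ev Succ (x # xs) (Suc x)"
| ev_proj: "i < length xs \<Longrightarrow> ev (Proj i) xs (xs ! i)"
| ev_comp: "list_all2 (\<lambda>g y. ev g xs y) gs ys \<Longrightarrow> ev f ys z \<Longrightarrow> ev (Comp f gs) xs z"
| ev_prim0: "ev f xs z \<Longrightarrow> ev (PrimRec f g) (0 # xs) z"
| ev_primS: "ev (PrimRec f g) (n # xs) y \<Longrightarrow> ev g (y # n # xs) z \<Longrightarrow>
    ev (PrimRec f g) (Suc n # xs) z"
| ev_mu: "ev f (n # xs) 0 \<Longrightarrow> (\<forall>m<n. \<exists>y. y > 0 \<and> ev f (m # xs) y) \<Longrightarrow>
    ev (Mu f) xs n"

text \<open>Function symbols are natural numbers; a finite signature is a list of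
arities: symbol f exists iff f < length sig, with arity sig ! f.\<close>
datatype 'v trm = Var 'v | App nat "'v trm list"

fun wf_trm :: "nat list \<Rightarrow> 'v trm \<Rightarrow> bool" where
  "wf_trm sig (Var v) = True"
| "wf_trm sig (App f ts) = (f < length sig \<and> length ts = sig ! f \<and> (\<forall>t\<in>set ts. wf_trm sig t))"

primrec subst :: "('v \<Rightarrow> 'w trm) \<Rightarrow> 'v trm \<Rightarrow> 'w trm" where
  "subst \<sigma> (Var v) = \<sigma> v"
| "subst \<sigma> (App f ts) = App f (map (subst \<sigma>) ts)"

inductive eqv :: "nat list \<Rightarrow> (nat trm \<times> nat trm) list \<Rightarrow> 'x trm \<Rightarrow> 'x trm \<Rightarrow> bool"
  for sig E where
  eqv_refl: "wf_trm sig t \<Longrightarrow> eqv sig E t t"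
| eqv_sym: "eqv sig E s t \<Longrightarrow> eqv sig E t s"
| eqv_trans: "eqv sig E s t \<Longrightarrow> eqv sig E t u \<Longrightarrow> eqv sig E s u"
| eqv_cong: "f < length sig \<Longrightarrow> length ts = sig ! f \<Longrightarrow> list_all2 (eqv sig E) ts us \<Longrightarrow>
    eqv sig E (App f ts) (App f us)"
| eqv_ax: "(l, r) \<in> set E \<Longrightarrow> (\<forall>v. wf_trm sig (\<sigma> v)) \<Longrightarrow>
    eqv sig E (subst \<sigma> l) (subst \<sigma> r)"

text \<open>Carrier of TX: well-formed terms over X modulo the congruence.\<close>
definition T_carrier :: "nat list \<Rightarrow> (nat trm \<times> nat trm) list \<Rightarrow> 'x trm set set" where
  "T_carrier sig E = {t. wf_trm sig t} // {(s, t). eqv sig E s t}"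

text \<open>Affine: T1 is a one-element set (1 = unit).\<close>
definition affine :: "nat list \<Rightarrow> (nat trm \<times> nat trm) list \<Rightarrow> bool" where
  "affine sig E \<longleftrightarrow> (\<exists>c. (T_carrier sig E :: unit trm set set) = {c})"

definition valid_instance :: "nat list \<Rightarrow> (nat trm \<times> nat trm) list \<Rightarrow> bool" where
  "valid_instance sig E \<longleftrightarrow> (\<forall>(l, r) \<in> set E. wf_trm sig l \<and> wf_trm sig r)"

fun enc_trm :: "nat trm \<Rightarrow> nat" where
  "enc_trm (Var v) = prod_encode (0, v)"
| "enc_trm (App f ts) = prod_encode (Suc f, list_encode (map enc_trm ts))"

definition enc_instance :: "nat list \<Rightarrow> (nat trm \<times> nat trm) list \<Rightarrow> nat" where
  "enc_instance sig E = prod_encode (list_encode sig,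
     list_encode (map (\<lambda>(l, r). prod_encode (enc_trm l, enc_trm r)) E))"

definition decides_affine :: "recf \<Rightarrow> bool" where
  "decides_affine r \<longleftrightarrow> (\<forall>sig E. valid_instance sig E \<longrightarrow>
     ev r [enc_instance sig E] (if affine sig E then 1 else 0))"

end

theory Submission
  imports Defs
begin


datatype V = VZ | VS V | VNl | VCs V V | PZ | PSc | PPj V | PCp V V | PPr V V | PMu V | Jk

primrec nthv :: "V \<Rightarrow> V \<Rightarrow> V" where
  "nthv VZ xs = (case xs of VCs x _ \<Rightarrow> x | _ \<Rightarrow> Jk)"
| "nthv (VS i) xs = (case xs of VCs _ r \<Rightarrow> nthv i r | _ \<Rightarrow> Jk)"
| "nthv VNl xs = Jk"
| "nthv (VCs a b) xs = Jk"
| "nthv PZ xs = Jk"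
| "nthv PSc xs = Jk"
| "nthv (PPj a) xs = Jk"
| "nthv (PCp a b) xs = Jk"
| "nthv (PPr a b) xs = Jk"
| "nthv (PMu a) xs = Jk"
| "nthv Jk xs = Jk"

primrec prn :: "(V \<Rightarrow> V) \<Rightarrow> (V \<Rightarrow> V) \<Rightarrow> V \<Rightarrow> V \<Rightarrow> V" where
  "prn F G VZ xs = F xs"
| "prn F G (VS n) xs = G (VCs (prn F G n xs) (VCs n xs))"
| "prn F G VNl xs = Jk"
| "prn F G (VCs a b) xs = Jk"
| "prn F G PZ xs = Jk"
| "prn F G PSc xs = Jk"
| "prn F G (PPj a) xs = Jk"
| "prn F G (PCp a b) xs = Jk"
| "prn F G (PPr a b) xs = Jk"
| "prn F G (PMu a) xs = Jk"
| "prn F G Jk xs = Jk"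

definition prv :: "(V \<Rightarrow> V) \<Rightarrow> (V \<Rightarrow> V) \<Rightarrow> V \<Rightarrow> V" where
  "prv F G v = (case v of VCs n xs \<Rightarrow> prn F G n xs | _ \<Rightarrow> Jk)"

definition isS :: "V \<Rightarrow> bool" where "isS v = (case v of VS _ \<Rightarrow> True | _ \<Rightarrow> False)"

definition mu :: "(V \<Rightarrow> V) \<Rightarrow> V \<Rightarrow> V \<Rightarrow> V" where
  "mu F n xs = (if \<exists>j. \<not> isS (F (VCs ((VS ^^ j) n) xs))
     then (let j = LEAST j. \<not> isS (F (VCs ((VS ^^ j) n) xs)) in
           if F (VCs ((VS ^^ j) n) xs) = VZ then (VS ^^ j) n else Jk)
     else Jk)"

lemma mu_unfold: "mu F n xs = (case F (VCs n xs) of VZ \<Rightarrow> n | VS y \<Rightarrow> mu F (VS n) xs | _ \<Rightarrow> Jk)"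
proof (cases "isS (F (VCs n xs))")
  case True
  then obtain y where y: "F (VCs n xs) = VS y" by (auto simp: isS_def split: V.splits)
  let ?P = "\<lambda>j. \<not> isS (F (VCs ((VS ^^ j) n) xs))"
  have sh: "\<And>j. (VS ^^ Suc j) n = (VS ^^ j) (VS n)" by (simp only: funpow_Suc_right comp_def)
  have ex: "(\<exists>j. ?P j) = (\<exists>j. ?P (Suc j))" using True
    by (metis funpow_0 not0_implies_Suc)
  show ?thesis
  proof (cases "\<exists>j. ?P j")
    case True2: True
    then obtain j where "?P j" by blast
    have "(LEAST j. ?P j) = Suc (LEAST m. ?P (Suc m))"
      by (rule Least_Suc[where P="?P", OF \<open>?P j\<close>]) (use True in simp)
    then show ?thesis using True2 ex y unfolding mu_def sh by (simp add: Let_def sh del: funpow.simps)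
  next
    case False
    then show ?thesis using ex y unfolding mu_def by (simp add: sh del: funpow.simps)
  qed
next
  case False
  let ?P = "\<lambda>j. \<not> isS (F (VCs ((VS ^^ j) n) xs))"
  have "?P 0" using False by simp
  then have "(LEAST j. ?P j) = 0" by (rule Least_eq_0)
  then have "mu F n xs = (if F (VCs n xs) = VZ then n else Jk)"
  proof -
    have ex: "\<exists>j. ?P j" using \<open>?P 0\<close> by blast
    show ?thesis unfolding mu_def using ex \<open>(LEAST j. ?P j) = 0\<close> by (simp add: Let_def)
  qed
  then show ?thesis using False by (auto simp: isS_def split: V.splits)
qed

primrec evv :: "V \<Rightarrow> V \<Rightarrow> V" where
  "evv VZ = (\<lambda>_. Jk)"
| "evv (VS a) = (\<lambda>_. Jk)"
| "evv Jk = (\<lambda>_. Jk)"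
| "evv VNl = (\<lambda>_. VNl)"
| "evv (VCs g gs) = (\<lambda>xs. VCs (evv g xs) (evv gs xs))"
| "evv PZ = (\<lambda>_. VZ)"
| "evv PSc = (\<lambda>xs. case xs of VCs x _ \<Rightarrow> VS x | _ \<Rightarrow> Jk)"
| "evv (PPj i) = (\<lambda>xs. nthv i xs)"
| "evv (PCp f gs) = (\<lambda>xs. evv f (evv gs xs))"
| "evv (PPr f g) = (\<lambda>xs. prv (evv f) (evv g) xs)"
| "evv (PMu f) = (\<lambda>xs. mu (evv f) VZ xs)"

definition hh :: "V \<Rightarrow> V \<Rightarrow> V \<Rightarrow> V \<Rightarrow> V" where
  "hh a f n xs = (case a of VZ \<Rightarrow> n | VS y \<Rightarrow> mu (evv f) (VS n) xs | _ \<Rightarrow> Jk)"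

lemma mu_hh: "mu (evv f) n xs = hh (evv f (VCs n xs)) f n xs"
  unfolding hh_def by (subst mu_unfold) (simp split: V.splits)

definition vn :: "nat \<Rightarrow> V" where "vn n = (VS ^^ n) VZ"
definition vl :: "nat list \<Rightarrow> V" where "vl xs = foldr (\<lambda>x r. VCs (vn x) r) xs VNl"
definition vlst :: "V list \<Rightarrow> V" where "vlst xs = foldr VCs xs VNl"

lemma vn_simps[simp]: "vn 0 = VZ" "vn (Suc n) = VS (vn n)" by (simp_all add: vn_def)
lemma vl_simps[simp]: "vl [] = VNl" "vl (x # xs) = VCs (vn x) (vl xs)" by (simp_all add: vl_def)
lemma vlst_simps[simp]: "vlst [] = VNl" "vlst (x # xs) = VCs x (vlst xs)" by (simp_all add: vlst_def)

fun pv :: "recf \<Rightarrow> V" where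
  "pv Zero = PZ"
| "pv Succ = PSc"
| "pv (Proj i) = PPj (vn i)"
| "pv (Comp f gs) = PCp (pv f) (vlst (map pv gs))"
| "pv (PrimRec f g) = PPr (pv f) (pv g)"
| "pv (Mu f) = PMu (pv f)"

lemma nthv_vl: "i < length xs \<Longrightarrow> nthv (vn i) (vl xs) = vn (xs ! i)"
  by (induction xs arbitrary: i) (auto simp: less_Suc_eq_0_disj)

lemma evv_vlst: "evv (vlst gs) xs = vlst (map (\<lambda>g. evv g xs) gs)"
  by (induction gs) auto

lemma list_all2_vl: "list_all2 (\<lambda>g y. evv (pv g) (vl xs) = vn y) gs ys \<Longrightarrow>
   vlst (map (\<lambda>g. evv (pv g) (vl xs)) gs) = vl ys"
  by (induction rule: list_all2_induct) auto

lemma prn_vn: "prv F G (vl (n # xs)) = prn F G (vn n) (vl xs)" by (simp add: prv_def)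

lemma lemA: "ev p xs y \<Longrightarrow> evv (pv p) (vl xs) = vn y"
proof (induction rule: ev.induct)
  case (ev_proj i xs) then show ?case by (simp add: nthv_vl)
next
  case (ev_comp xs gs ys f z)
  have "list_all2 (\<lambda>g y. evv (pv g) (vl xs) = vn y) gs ys"
    using ev_comp.IH(1) by (rule list_all2_mono) auto
  then have "vlst (map (\<lambda>g. evv (pv g) (vl xs)) gs) = vl ys" by (rule list_all2_vl)
  then show ?case using ev_comp by (simp add: evv_vlst comp_def)
next
  case (ev_prim0 f xs z g) then show ?case by (simp add: prv_def)
next
  case (ev_primS f g n xs y z) then show ?case by (simp add: prv_def)
next
  case (ev_mu f n xs)
  let ?F = "evv (pv f)"
  let ?P = "\<lambda>j. \<not> isS (?F (VCs ((VS ^^ j) VZ) (vl xs)))"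
  have a: "?F (VCs ((VS ^^ n) VZ) (vl xs)) = VZ" using ev_mu.IH(1) by (simp add: vn_def)
  have b: "\<And>m. m < n \<Longrightarrow> \<not> ?P m"
  proof -
    fix m assume "m < n"
    then obtain y where "y > 0" "?F (vl (m # xs)) = vn y" using ev_mu.IH(2) by blast
    then show "\<not> ?P m" by (cases y) (auto simp: isS_def vn_def)
  qed
  have Pn: "?P n" using a by (simp add: isS_def)
  have "(LEAST j. ?P j) = n"
    by (rule Least_equality) (use Pn b in \<open>auto simp: not_less[symmetric]\<close>)
  have ex: "\<exists>j. ?P j" using Pn by blast
  have "mu ?F VZ (vl xs) = vn n" unfolding mu_def using ex \<open>(LEAST j. ?P j) = n\<close> a by (simp add: Let_def vn_def)
  then show ?case by simp
qed auto



definition sg :: "nat list" where "sg = [0,1,0,2,0,0,1,2,2,1,2,2,3,4,2]"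

abbreviation tz :: "'v trm" where "tz \<equiv> App 0 []"
abbreviation tsu :: "'v trm \<Rightarrow> 'v trm" where "tsu a \<equiv> App 1 [a]"
abbreviation tnil :: "'v trm" where "tnil \<equiv> App 2 []"
abbreviation tcs :: "'v trm \<Rightarrow> 'v trm \<Rightarrow> 'v trm" where "tcs a b \<equiv> App 3 [a, b]"
abbreviation tPZ :: "'v trm" where "tPZ \<equiv> App 4 []"
abbreviation tPS :: "'v trm" where "tPS \<equiv> App 5 []"
abbreviation tPj :: "'v trm \<Rightarrow> 'v trm" where "tPj a \<equiv> App 6 [a]"
abbreviation tCp :: "'v trm \<Rightarrow> 'v trm \<Rightarrow> 'v trm" where "tCp a b \<equiv> App 7 [a, b]"
abbreviation tPr :: "'v trm \<Rightarrow> 'v trm \<Rightarrow> 'v trm" where "tPr a b \<equiv> App 8 [a, b]"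
abbreviation tMu :: "'v trm \<Rightarrow> 'v trm" where "tMu a \<equiv> App 9 [a]"
abbreviation tEv :: "'v trm \<Rightarrow> 'v trm \<Rightarrow> 'v trm" where "tEv a b \<equiv> App 10 [a, b]"
abbreviation tNth :: "'v trm \<Rightarrow> 'v trm \<Rightarrow> 'v trm" where "tNth a b \<equiv> App 11 [a, b]"
abbreviation tM :: "'v trm \<Rightarrow> 'v trm \<Rightarrow> 'v trm \<Rightarrow> 'v trm" where "tM a b c \<equiv> App 12 [a, b, c]"
abbreviation tH :: "'v trm \<Rightarrow> 'v trm \<Rightarrow> 'v trm \<Rightarrow> 'v trm \<Rightarrow> 'v trm" where "tH a b c d \<equiv> App 13 [a, b, c, d]"
abbreviation tK :: "'v trm \<Rightarrow> 'v trm \<Rightarrow> 'v trm" where "tK a b \<equiv> App 14 [a, b]"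

abbreviation "x0 \<equiv> (Var 0 :: nat trm)"
abbreviation "x1 \<equiv> (Var 1 :: nat trm)"
abbreviation "x2 \<equiv> (Var 2 :: nat trm)"
abbreviation "x3 \<equiv> (Var 3 :: nat trm)"

definition Egen :: "(nat trm \<times> nat trm) list" where
  "Egen = [
    (tEv tPZ x0, tz),
    (tEv tPS (tcs x0 x1), tsu x0),
    (tEv (tPj x0) x1, tNth x0 x1),
    (tNth tz (tcs x0 x1), x0),
    (tNth (tsu x0) (tcs x1 x2), tNth x0 x2),
    (tEv tnil x0, tnil),
    (tEv (tcs x0 x1) x2, tcs (tEv x0 x2) (tEv x1 x2)),
    (tEv (tCp x0 x1) x2, tEv x0 (tEv x1 x2)),
    (tEv (tPr x0 x1) (tcs tz x2), tEv x0 x2),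
    (tEv (tPr x0 x1) (tcs (tsu x3) x2), tEv x1 (tcs (tEv (tPr x0 x1) (tcs x3 x2)) (tcs x3 x2))),
    (tEv (tMu x0) x1, tM x0 tz x1),
    (tM x0 x1 x2, tH (tEv x0 (tcs x1 x2)) x0 x1 x2),
    (tH tz x0 x1 x2, x1),
    (tH (tsu x3) x0 x1 x2, tM x0 (tsu x1) x2),
    (tK tz x0, tz)]"

definition kk :: "V \<Rightarrow> V \<Rightarrow> V" where "kk a x = (if a = VZ then VZ else x)"

definition I :: "nat \<Rightarrow> V list \<Rightarrow> V" where
  "I f vs = (if f = 0 then VZ else if f = 1 then VS (vs!0) else if f = 2 then VNl
    else if f = 3 then VCs (vs!0) (vs!1) else if f = 4 then PZ else if f = 5 then PSc
    else if f = 6 then PPj (vs!0) else if f = 7 then PCp (vs!0) (vs!1)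
    else if f = 8 then PPr (vs!0) (vs!1) else if f = 9 then PMu (vs!0)
    else if f = 10 then evv (vs!0) (vs!1) else if f = 11 then nthv (vs!0) (vs!1)
    else if f = 12 then mu (evv (vs!0)) (vs!1) (vs!2)
    else if f = 13 then hh (vs!0) (vs!1) (vs!2) (vs!3)
    else if f = 14 then kk (vs!0) (vs!1) else Jk)"

fun eval :: "('v \<Rightarrow> V) \<Rightarrow> 'v trm \<Rightarrow> V" where
  "eval \<rho> (Var v) = \<rho> v"
| "eval \<rho> (App f ts) = I f (map (eval \<rho>) ts)"

lemma eval_subst: "eval \<rho> (subst \<sigma> t) = eval (\<lambda>v. eval \<rho> (\<sigma> v)) t"
  by (induction t) (auto simp: comp_def cong: map_cong)

lemma list_all2_map_eq: "list_all2 (\<lambda>a b. g a = g b) xs ys \<Longrightarrow> map g xs = map g ys"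
  by (induction rule: list_all2_induct) auto

lemma sound: "eqv sig E s t \<Longrightarrow> (\<forall>(l, r)\<in>set E. \<forall>\<rho>. eval \<rho> l = eval \<rho> r) \<Longrightarrow> eval \<rho> s = eval \<rho> t"
proof (induction rule: eqv.induct)
  case (eqv_cong f ts us)
  have "list_all2 (\<lambda>a b. eval \<rho> a = eval \<rho> b) ts us"
    using eqv_cong.IH eqv_cong.prems by (auto elim: list_all2_mono)
  then show ?case by (simp add: list_all2_map_eq)
next
  case (eqv_ax l r \<sigma>)
  then show ?case by (auto simp: eval_subst)
qed auto

lemma Egen_sound: "\<forall>(l, r)\<in>set Egen. \<forall>\<rho>. eval \<rho> l = eval \<rho> r"
  by (auto simp: Egen_def I_def prv_def mu_hh hh_def kk_def split: V.splits)



primrec tn :: "nat \<Rightarrow> 'v trm" where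
  "tn 0 = tz" | "tn (Suc n) = tsu (tn n)"

definition tlst :: "'v trm list \<Rightarrow> 'v trm" where "tlst xs = foldr tcs xs tnil"
lemma tlst_simps[simp]: "tlst [] = tnil" "tlst (x # xs) = tcs x (tlst xs)" by (simp_all add: tlst_def)

fun pt :: "recf \<Rightarrow> 'v trm" where
  "pt Zero = tPZ"
| "pt Succ = tPS"
| "pt (Proj i) = tPj (tn i)"
| "pt (Comp f gs) = tCp (pt f) (tlst (map pt gs))"
| "pt (PrimRec f g) = tPr (pt f) (pt g)"
| "pt (Mu f) = tMu (pt f)"

lemma sg_simps[simp]: "length sg = 15" "sg!0 = 0" "sg!1 = 1" "sg ! Suc 0 = Suc 0" "sg!2 = 0" "sg!3 = 2" "sg!4 = 0" "sg!5 = 0"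
  "sg!6 = 1" "sg!7 = 2" "sg!8 = 2" "sg!9 = 1" "sg!10 = 2" "sg!11 = 2" "sg!12 = 3" "sg!13 = 4" "sg!14 = 2"
  by (simp_all add: sg_def)

lemma eval_tn[simp]: "eval \<rho> (tn n) = vn n" by (induction n) (auto simp: I_def)
lemma eval_tlst[simp]: "eval \<rho> (tlst xs) = vlst (map (eval \<rho>) xs)" by (induction xs) (auto simp: I_def)
lemma eval_pt[simp]: "eval \<rho> (pt p) = pv p" by (induction p rule: pt.induct) (auto simp: I_def intro!: arg_cong[where f=vlst])

lemma wf_tn[simp]: "wf_trm sg (tn n)" by (induction n) auto
lemma wf_tlst[simp]: "(\<forall>t\<in>set xs. wf_trm sg t) \<Longrightarrow> wf_trm sg (tlst xs)" by (induction xs) auto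
lemma wf_pt[simp]: "wf_trm sg (pt p)" by (induction p rule: pt.induct) auto

declare eqv.eqv_trans[trans]

definition sb :: "'x trm list \<Rightarrow> nat \<Rightarrow> 'x trm" where
  "sb xs v = (if v < length xs then xs ! v else tz)"

locale ctx = fixes E :: "(nat trm \<times> nat trm) list" assumes sub: "set Egen \<subseteq> set E"
begin

abbreviation Q (infix "\<approx>" 50) where "Q s t \<equiv> eqv sg E (s::unit trm) t"

lemma ax: assumes "i < length Egen" "\<forall>t\<in>set xs. wf_trm sg t"
  shows "subst (sb xs) (fst (Egen ! i)) \<approx> subst (sb xs) (snd (Egen ! i))"
proof -
  have "(fst (Egen ! i), snd (Egen ! i)) \<in> set E" using assms(1) sub by auto
  moreover have "\<forall>v. wf_trm sg (sb xs v)" using assms(2) by (auto simp: sb_def)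
  ultimately show ?thesis by (rule eqv.eqv_ax)
qed

lemma refl[intro]: "wf_trm sg t \<Longrightarrow> t \<approx> t" by (rule eqv.eqv_refl)

lemma cong1: "f < length sg \<Longrightarrow> sg ! f = 1 \<Longrightarrow> a \<approx> a' \<Longrightarrow> App f [a] \<approx> App f [a']"
  by (rule eqv.eqv_cong) auto
lemma cong2: "f < length sg \<Longrightarrow> sg ! f = 2 \<Longrightarrow> a \<approx> a' \<Longrightarrow> b \<approx> b' \<Longrightarrow> App f [a, b] \<approx> App f [a', b']"
  by (rule eqv.eqv_cong) auto
lemma cong4: "f < length sg \<Longrightarrow> sg ! f = 4 \<Longrightarrow> a \<approx> a' \<Longrightarrow> b \<approx> b' \<Longrightarrow> c \<approx> c' \<Longrightarrow> d \<approx> d' \<Longrightarrow>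
  App f [a, b, c, d] \<approx> App f [a', b', c', d']"
  by (rule eqv.eqv_cong) auto

lemma e1: "wf_trm sg a \<Longrightarrow> tEv tPZ a \<approx> tz"
  using ax[of 0 "[a]"] by (simp add: Egen_def sb_def)
lemma e2: "wf_trm sg a \<Longrightarrow> wf_trm sg b \<Longrightarrow> tEv tPS (tcs a b) \<approx> tsu a"
  using ax[of 1 "[a,b]"] by (simp add: Egen_def sb_def)
lemma e3: "wf_trm sg a \<Longrightarrow> wf_trm sg b \<Longrightarrow> tEv (tPj a) b \<approx> tNth a b"
  using ax[of 2 "[a,b]"] by (simp add: Egen_def sb_def)
lemma e4: "wf_trm sg a \<Longrightarrow> wf_trm sg b \<Longrightarrow> tNth tz (tcs a b) \<approx> a"
  using ax[of 3 "[a,b]"] by (simp add: Egen_def sb_def)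
lemma e5: "wf_trm sg a \<Longrightarrow> wf_trm sg b \<Longrightarrow> wf_trm sg c \<Longrightarrow> tNth (tsu a) (tcs b c) \<approx> tNth a c"
  using ax[of 4 "[a,b,c]"] by (simp add: Egen_def sb_def)
lemma e6: "wf_trm sg a \<Longrightarrow> tEv tnil a \<approx> tnil"
  using ax[of 5 "[a]"] by (simp add: Egen_def sb_def)
lemma e7: "wf_trm sg a \<Longrightarrow> wf_trm sg b \<Longrightarrow> wf_trm sg c \<Longrightarrow> tEv (tcs a b) c \<approx> tcs (tEv a c) (tEv b c)"
  using ax[of 6 "[a,b,c]"] by (simp add: Egen_def sb_def)
lemma e8: "wf_trm sg a \<Longrightarrow> wf_trm sg b \<Longrightarrow> wf_trm sg c \<Longrightarrow> tEv (tCp a b) c \<approx> tEv a (tEv b c)"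
  using ax[of 7 "[a,b,c]"] by (simp add: Egen_def sb_def)
lemma e9: "wf_trm sg a \<Longrightarrow> wf_trm sg b \<Longrightarrow> wf_trm sg c \<Longrightarrow> tEv (tPr a b) (tcs tz c) \<approx> tEv a c"
  using ax[of 8 "[a,b,c]"] by (simp add: Egen_def sb_def)
lemma e10: "wf_trm sg a \<Longrightarrow> wf_trm sg b \<Longrightarrow> wf_trm sg c \<Longrightarrow> wf_trm sg d \<Longrightarrow>
   tEv (tPr a b) (tcs (tsu d) c) \<approx> tEv b (tcs (tEv (tPr a b) (tcs d c)) (tcs d c))"
  using ax[of 9 "[a,b,c,d]"] by (simp add: Egen_def sb_def)
lemma e11: "wf_trm sg a \<Longrightarrow> wf_trm sg b \<Longrightarrow> tEv (tMu a) b \<approx> tM a tz b"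
  using ax[of 10 "[a,b]"] by (simp add: Egen_def sb_def)
lemma e12: "wf_trm sg a \<Longrightarrow> wf_trm sg b \<Longrightarrow> wf_trm sg c \<Longrightarrow> tM a b c \<approx> tH (tEv a (tcs b c)) a b c"
  using ax[of 11 "[a,b,c]"] by (simp add: Egen_def sb_def)
lemma e13: "wf_trm sg a \<Longrightarrow> wf_trm sg b \<Longrightarrow> wf_trm sg c \<Longrightarrow> tH tz a b c \<approx> b"
  using ax[of 12 "[a,b,c]"] by (simp add: Egen_def sb_def)
lemma e14: "wf_trm sg a \<Longrightarrow> wf_trm sg b \<Longrightarrow> wf_trm sg c \<Longrightarrow> wf_trm sg d \<Longrightarrow>
   tH (tsu d) a b c \<approx> tM a (tsu b) c"
  using ax[of 13 "[a,b,c,d]"] by (simp add: Egen_def sb_def)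
lemma e15: "wf_trm sg a \<Longrightarrow> tK tz a \<approx> tz"
  using ax[of 14 "[a]"] by (simp add: Egen_def sb_def)

end


context ctx begin

lemma nthB: "i < length xs \<Longrightarrow> tNth (tn i) (tlst (map tn xs)) \<approx> tn (xs ! i)"
proof (induction xs arbitrary: i)
  case (Cons x xs)
  show ?case
  proof (cases i)
    case 0 then show ?thesis by (simp add: e4)
  next
    case (Suc j)
    have "tNth (tn i) (tlst (map tn (x # xs))) \<approx> tNth (tn j) (tlst (map tn xs))"
      using Suc e5[of "tn j" "tn x" "tlst (map tn xs)"] by simp
    also have "\<dots> \<approx> tn (xs ! j)" by (rule Cons.IH) (use Cons.prems Suc in simp)
    finally show ?thesis using Suc by simp
  qed
qed simp

lemma listB: "list_all2 (\<lambda>g y. tEv (pt g) X \<approx> tn y) gs ys \<Longrightarrow> wf_trm sg X \<Longrightarrow>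
   tEv (tlst (map pt gs)) X \<approx> tlst (map tn ys)"
proof (induction rule: list_all2_induct)
  case Nil then show ?case by (simp add: e6)
next
  case (Cons g gs y ys)
  have "tEv (tlst (map pt (g # gs))) X \<approx> tcs (tEv (pt g) X) (tEv (tlst (map pt gs)) X)"
    using Cons by (simp add: e7)
  also have "\<dots> \<approx> tcs (tn y) (tlst (map tn ys))" using Cons by (intro cong2) auto
  finally show ?case by simp
qed

lemma lemB: "ev p xs y \<Longrightarrow> tEv (pt p) (tlst (map tn xs)) \<approx> tn y"
proof (induction rule: ev.induct)
  case (ev_zero xs) then show ?case by (simp add: e1)
next
  case (ev_succ x xs) then show ?case using e2[of "tn x" "tlst (map tn xs)"] by simp
next
  case (ev_proj i xs)
  have "tEv (pt (Proj i)) (tlst (map tn xs)) \<approx> tNth (tn i) (tlst (map tn xs))" by (simp add: e3)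
  also have "\<dots> \<approx> tn (xs ! i)" using ev_proj by (rule nthB)
  finally show ?case .
next
  case (ev_comp xs gs ys f z)
  have l: "list_all2 (\<lambda>g y. tEv (pt g) (tlst (map tn xs)) \<approx> tn y) gs ys"
    using ev_comp.IH(1) by (simp add: list_all2_conv_all_nth)
  have "tEv (pt (Comp f gs)) (tlst (map tn xs)) \<approx> tEv (pt f) (tEv (tlst (map pt gs)) (tlst (map tn xs)))"
    by (simp add: e8)
  also have "\<dots> \<approx> tEv (pt f) (tlst (map tn ys))"
    by (intro cong2 refl listB[OF l]) auto
  also have "\<dots> \<approx> tn z" by (rule ev_comp.IH(2))
  finally show ?case .
next
  case (ev_prim0 f xs z g)
  have "tEv (pt (PrimRec f g)) (tlst (map tn (0 # xs))) \<approx> tEv (pt f) (tlst (map tn xs))"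
    by (simp add: e9)
  also have "\<dots> \<approx> tn z" by (rule ev_prim0.IH)
  finally show ?case .
next
  case (ev_primS f g n xs y z)
  let ?X = "tlst (map tn xs)"
  have "tEv (pt (PrimRec f g)) (tlst (map tn (Suc n # xs))) \<approx>
     tEv (pt g) (tcs (tEv (pt (PrimRec f g)) (tcs (tn n) ?X)) (tcs (tn n) ?X))"
    using e10[of "pt f" "pt g" ?X "tn n"] by simp
  also have "\<dots> \<approx> tEv (pt g) (tcs (tn y) (tcs (tn n) ?X))"
    using ev_primS.IH(1) by (intro cong2 refl) auto
  also have "\<dots> \<approx> tn z" using ev_primS.IH(2) by simp
  finally show ?case .
next
  case (ev_mu f n xs)
  let ?X = "tlst (map tn xs)"
  have key: "\<And>k m. m + k = n \<Longrightarrow> tM (pt f) (tn m) ?X \<approx> tn n"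
  proof -
    fix k show "\<And>m. m + k = n \<Longrightarrow> tM (pt f) (tn m) ?X \<approx> tn n"
    proof (induction k)
      case 0
      have "tM (pt f) (tn m) ?X \<approx> tH (tEv (pt f) (tcs (tn m) ?X)) (pt f) (tn m) ?X" by (simp add: e12)
      also have "\<dots> \<approx> tH tz (pt f) (tn m) ?X"
        using ev_mu.IH(1) 0 by (intro cong4 refl) auto
      also have "\<dots> \<approx> tn m" by (simp add: e13)
      finally show ?case using 0 by simp
    next
      case (Suc k)
      then have "m < n" by simp
      then obtain y where y: "y > 0" "tEv (pt f) (tlst (map tn (m # xs))) \<approx> tn y"
        using ev_mu.IH(2) by blast
      then obtain y' where y': "y = Suc y'" by (cases y) auto
      have "tM (pt f) (tn m) ?X \<approx> tH (tEv (pt f) (tcs (tn m) ?X)) (pt f) (tn m) ?X" by (simp add: e12)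
      also have "\<dots> \<approx> tH (tsu (tn y')) (pt f) (tn m) ?X"
        using y y' by (intro cong4 refl) auto
      also have "\<dots> \<approx> tM (pt f) (tn (Suc m)) ?X" using e14[of "pt f" "tn m" ?X "tn y'"] by simp
      also have "\<dots> \<approx> tn n" using Suc.IH[of "Suc m"] Suc.prems by simp
      finally show ?case .
    qed
  qed
  have "tEv (pt (Mu f)) ?X \<approx> tM (pt f) tz ?X" by (simp add: e11)
  also have "\<dots> \<approx> tn n" using key[of 0 n] by simp
  finally show ?case .
qed

end


lemma evP0: "ev (Proj 0) (w # xs) w" using ev.ev_proj[of 0 "w # xs"] by simp
lemma evP1: "ev (Proj 1) (a # w # xs) w" using ev.ev_proj[of 1 "a # w # xs"] by simp
lemma evS1: "ev a xs x \<Longrightarrow> ev (Comp Succ [a]) xs (Suc x)"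
  by (rule ev.ev_comp[of _ _ "[x]"]) (auto intro: ev.intros)
lemma evC1: "ev a xs x \<Longrightarrow> ev f [x] z \<Longrightarrow> ev (Comp f [a]) xs z"
  by (rule ev.ev_comp[of _ _ "[x]"]) auto
lemma evC2: "ev a xs x \<Longrightarrow> ev b xs y \<Longrightarrow> ev f [x, y] z \<Longrightarrow> ev (Comp f [a, b]) xs z"
  by (rule ev.ev_comp[of _ _ "[x, y]"]) auto

primrec constp :: "nat \<Rightarrow> recf" where
  "constp 0 = Zero" | "constp (Suc c) = Comp Succ [constp c]"
lemma evK: "ev (constp c) xs c" by (induction c) (auto intro: ev.intros evS1)

definition "ADD = PrimRec (Proj 0) (Comp Succ [Proj 0])"
lemma evADD: "ev ADD [a, b] (a + b)"
proof (induction a)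
  case 0 then show ?case unfolding ADD_def by (auto intro: ev.ev_prim0 evP0)
next
  case (Suc a) then show ?case unfolding ADD_def
    by (auto intro!: ev.ev_primS[where y="a+b"] evS1 evP0 simp: ADD_def)
qed

definition "TRI = PrimRec Zero (Comp ADD [Proj 0, Comp Succ [Proj 1]])"
lemma evTRI: "ev TRI [n] (triangle n)"
proof (induction n)
  case 0 then show ?case unfolding TRI_def by (auto intro: ev.intros)
next
  case (Suc n)
  have "ev (Comp ADD [Proj 0, Comp Succ [Proj 1]]) [triangle n, n] (triangle n + Suc n)"
    by (rule evC2[OF evP0 evS1[OF evP1] evADD])
  then show ?case using Suc unfolding TRI_def by (auto intro: ev.ev_primS)
qed

definition "PE = Comp ADD [Comp TRI [ADD], Proj 0]"
lemma evPE: "ev PE [a, b] (prod_encode (a, b))"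
  unfolding PE_def prod_encode_def
  by (auto intro!: evC2[OF evC1[OF evADD evTRI] evP0 evADD])

definition "PEP a b = Comp PE [a, b]"
lemma evPEP: "ev a xs x \<Longrightarrow> ev b xs y \<Longrightarrow> ev (PEP a b) xs (prod_encode (x, y))"
  unfolding PEP_def by (rule evC2[OF _ _ evPE])

definition "LE2 a b = Comp Succ [PEP a (Comp Succ [PEP b Zero])]"
lemma evLE2: "ev a xs x \<Longrightarrow> ev b xs y \<Longrightarrow> ev (LE2 a b) xs (Suc (prod_encode (x, Suc (prod_encode (y, 0)))))"
  unfolding LE2_def by (auto intro!: evS1 evPEP ev.intros)

definition "NC = PrimRec (constp (prod_encode (1, 0))) (Comp PE [constp 2, Comp Succ [Comp PE [Proj 0, Zero]]])"
lemma evNC: "ev NC [w] (enc_trm (tn w :: nat trm))"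
proof (induction w)
  case 0 then show ?case unfolding NC_def by (auto intro!: ev.ev_prim0 evK)
next
  case (Suc w)
  have "ev (Comp PE [constp 2, Comp Succ [Comp PE [Proj 0, Zero]]]) [enc_trm (tn w :: nat trm), w]
    (prod_encode (2, Suc (prod_encode (enc_trm (tn w :: nat trm), 0))))"
    by (intro evC2[OF evK evS1 evPE] evC2[OF evP0 _ evPE] ev.intros)
  from ev.ev_primS[OF Suc[unfolded NC_def] this] show ?case unfolding NC_def by (simp add: numeral_2_eq_2)
qed

lemma evNC1: "ev (Comp NC [Proj 0]) [w] (enc_trm (tn w :: nat trm))"
  by (rule evC1[OF evP0 evNC])

definition "Rc = list_encode (map (\<lambda>(l, r). prod_encode (enc_trm l, enc_trm r)) Egen)"
definition "NILP = constp (prod_encode (Suc 2, 0))"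
definition "CS1P = PEP (constp (Suc 3)) (LE2 (Proj 0) NILP)"
definition "CPP D = PEP (constp (Suc 7)) (LE2 (constp (enc_trm (pt D :: nat trm))) CS1P)"
definition "ARGP = PEP (constp (Suc 3)) (LE2 (Comp NC [Proj 0]) NILP)"
definition "EVP D = PEP (constp (Suc 10)) (LE2 (CPP D) ARGP)"
definition "LHSP D = PEP (constp (Suc 14)) (LE2 (EVP D) (constp (prod_encode (0,0))))"
definition "Qp D = PEP (constp (list_encode sg)) (Comp Succ [PEP (PEP (LHSP D) (constp (prod_encode (0,0)))) (constp Rc)])"

definition "Build D w = prod_encode (list_encode sg, Suc (prod_encode (prod_encode (prod_encode (Suc 14, Suc(prod_encode(prod_encode(Suc 10, Suc(prod_encode(prod_encode(Suc 7, Suc(prod_encode(enc_trm (pt D :: nat trm), Suc(prod_encode(prod_encode(Suc 3, Suc(prod_encode(w, Suc(prod_encode(prod_encode(Suc 2, 0), 0))))), 0))))), Suc(prod_encode(prod_encode(Suc 3, Suc(prod_encode(enc_trm (tn w :: nat trm), Suc(prod_encode(prod_encode(Suc 2,0), 0))))), 0))))), Suc(prod_encode(prod_encode(0,0), 0))))), prod_encode(0,0)), Rc)))"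

lemma evQ: "ev (Qp D) [w] (Build D w)"
  unfolding Qp_def Build_def LHSP_def EVP_def CPP_def ARGP_def CS1P_def NILP_def
  by (intro evPEP evS1 evLE2 evK evP0 evNC1 ev.ev_zero)

definition "wq D = enc_trm (pt (Qp D) :: nat trm)"
definition "lhsT D = (tK (tEv (pt (Comp D [Qp D])) (tlst (map tn [wq D]))) (Var 0) :: nat trm)"
definition "EI D = (lhsT D, Var 0) # Egen"

lemma encEI: "enc_instance sg (EI D) = Build D (wq D)"
  unfolding Build_def enc_instance_def EI_def lhsT_def Rc_def
  by (simp only: enc_trm.simps list_encode.simps list.map prod.case tlst_simps pt.simps wq_def[symmetric])



lemma subst_tn[simp]: "subst \<sigma> (tn n) = tn n" by (induction n) auto
lemma subst_tlst[simp]: "subst \<sigma> (tlst xs) = tlst (map (subst \<sigma>) xs)" by (induction xs) auto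
lemma subst_pt[simp]: "subst \<sigma> (pt p) = pt p" by (induction p rule: pt.induct) (auto intro!: arg_cong[where f=tlst])

lemma vlst_vn: "vlst (map vn xs) = vl xs" by (induction xs) auto

lemma valid: "valid_instance sg (EI D)"
  by (simp add: valid_instance_def EI_def lhsT_def Egen_def)


theorem theorem4:
  shows "\<not> (\<exists>r. decides_affine r)"
proof
  assume "\<exists>r. decides_affine r"
  then obtain D where D: "decides_affine D" by blast
  let ?E = "EI D"
  let ?N = "enc_instance sg ?E"
  let ?P = "Comp D [Qp D]"
  have evq: "ev (Qp D) [wq D] ?N" using evQ[of D "wq D"] by (simp add: encEI)
  have dec: "ev D [?N] (if affine sg ?E then 1 else 0)"
    using D valid unfolding decides_affine_def by blast
  let ?R = "{(s, t). eqv sg ?E s (t :: unit trm)}"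
  show False
  proof (cases "affine sg ?E")
    case True
    then have "ev ?P [wq D] 1" using dec evq by (auto intro!: ev.ev_comp[of _ _ "[?N]"])
    then have v: "evv (pv ?P) (vl [wq D]) = vn 1" by (rule lemA)
    have snd: "\<forall>(l, r)\<in>set ?E. \<forall>\<rho>. eval \<rho> l = eval \<rho> r"
      using Egen_sound v[simplified] by (auto simp: EI_def lhsT_def I_def kk_def vlst_vn)
    have ne: "\<not> eqv sg ?E (tz :: unit trm) (Var ())"
    proof
      assume "eqv sg ?E (tz :: unit trm) (Var ())"
      from sound[OF this snd, of "\<lambda>_. VNl"] show False by (simp add: I_def)
    qed
    from True obtain c where c: "(T_carrier sg ?E :: unit trm set set) = {c}" unfolding affine_def by blast
    have "?R `` {tz} \<in> (T_carrier sg ?E :: unit trm set set)"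
      unfolding T_carrier_def by (rule quotientI) simp
    moreover have "?R `` {Var ()} \<in> (T_carrier sg ?E :: unit trm set set)"
      unfolding T_carrier_def by (rule quotientI) simp
    ultimately have "?R `` {tz} = ?R `` {Var ()}" using c by (metis singletonD)
    moreover have "Var () \<in> ?R `` {Var ()}" by (auto intro: eqv.eqv_refl)
    ultimately show False using ne by auto
  next
    case False
    then have "ev ?P [wq D] 0" using dec evq by (auto intro!: ev.ev_comp[of _ _ "[?N]"])
    interpret ctx ?E by unfold_locales (auto simp: EI_def)
    have P0: "eqv sg ?E (tEv (pt ?P) (tlst (map tn [wq D])) :: unit trm) tz" using lemB[OF \<open>ev ?P [wq D] 0\<close>] by simp
    have all: "eqv sg ?E t tz" if "wf_trm sg t" for t :: "unit trm"
    proof -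
      have "(lhsT D, Var 0) \<in> set ?E" by (simp add: EI_def)
      moreover have "\<forall>v. wf_trm sg (sb [t] v)" using that by (auto simp: sb_def)
      ultimately have "eqv sg ?E (subst (sb [t]) (lhsT D)) (subst (sb [t]) (Var 0))" by (rule eqv.eqv_ax)
      then have "eqv sg ?E (tK (tEv (pt ?P) (tlst (map tn [wq D]))) t) t"
        by (simp add: lhsT_def sb_def del: pt.simps tlst_simps)
      then have "eqv sg ?E t (tK (tEv (pt ?P) (tlst (map tn [wq D]))) t)" by (rule eqv.eqv_sym)
      also have "eqv sg ?E \<dots> (tK tz t)" using P0 that by (intro cong2 refl) auto
      also have "eqv sg ?E \<dots> tz" using that by (rule e15)
      finally show ?thesis .
    qed
    have "(T_carrier sg ?E :: unit trm set set) = {?R `` {tz}}"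
    proof -
      have cls: "?R `` {t} = ?R `` {tz}" if "wf_trm sg t" for t :: "unit trm"
      proof -
        have a1: "eqv sg ?E t tz" by (rule all[OF that])
        have a2: "eqv sg ?E tz t" by (rule eqv.eqv_sym[OF a1])
        show ?thesis
        proof (intro set_eqI iffI)
          fix u assume "u \<in> ?R `` {t}"
          then have "eqv sg ?E t u" by simp
          then have "eqv sg ?E tz u" by (rule eqv.eqv_trans[OF a2])
          then show "u \<in> ?R `` {tz}" by simp
        next
          fix u assume "u \<in> ?R `` {tz}"
          then have "eqv sg ?E tz u" by simp
          then have "eqv sg ?E t u" by (rule eqv.eqv_trans[OF a1])
          then show "u \<in> ?R `` {t}" by simp
        qed
      qed
      have wz: "wf_trm sg (tz :: unit trm)" by simp
      show ?thesis unfolding T_carrier_def quotient_def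
      proof (intro equalityI subsetI)
        fix X assume "X \<in> (\<Union>x\<in>{t. wf_trm sg t}. {?R `` {x}})"
        then obtain x where x: "wf_trm sg x" "X = ?R `` {x}" by blast
        show "X \<in> {?R `` {tz}}" using cls[OF x(1)] x(2) by (simp only: singleton_iff)
      next
        fix X assume "X \<in> {?R `` {tz}}"
        then have "X = ?R `` {tz}" by (simp only: singleton_iff)
        then show "X \<in> (\<Union>x\<in>{t. wf_trm sg t}. {?R `` {x}})" using wz by blast
      qed
    qed
    then have "affine sg ?E" unfolding affine_def by blast
    with False show False by simp
  qed
qed


end
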